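(* Let $k\geq 2$ and $0\leq\ell\leq k-1$ be integers and let $G=(V,E)$ be a graph. Let $X_1,X_2\subseteq V$. Let $\sim$ be a symmetric binary relation on $V$ such that (a) for every $u\in V$ and $v\in X_1$, $v$ has at most $\Delta_1$ neighbours $w\in X_2$, and at most $s_1$ of them satisfy $u\sim w$; (b) for every $u\in V$ and $v\in X_2$, $v$ has at most $\Delta_2$ neighbours $w\in X_1$, and at most $s_2$ of them satisfy $u\sim w$. Let $M=\max(\Delta_1s_2,\Delta_2s_1)$. Then the number of homomorphic $2k$-cycles $(x_1,\dots,x_{2k})\in(X_1\times X_2\times X_1\times\dots\times X_2)\cup(X_2\times X_1\times X_2\times\dots\times X_1)$ in $G$ such that $x_i\sim x_j$ for some $i\neq j$ is at most $$32k^{3/2}M^{1/2}\hom(C_{2\ell},G)^{\frac{1}{2(k-\ell)}}\hom(C_{2k},G)^{1-\frac{1}{2(k-\ell)}}.$$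
   Context: A homomorphic $2k$-cycle in $G$ is a tuple $(x_1,\dots,x_{2k})\in V^{2k}$ with $x_ix_{i+1}\in E$ for all $i$, indices modulo $2k$. $\hom(H,G)$ is the number of homomorphisms from $H$ to $G$. Conventions: $C_0$ is the one-vertex graph (so $\hom(C_0,G)=|V|$) and $C_2$ is a single edge. *)

theory Defs
  imports Complex_Main "HOL-Library.FuncSet"
begin

definition graph :: "'a set \<Rightarrow> ('a \<Rightarrow> 'a \<Rightarrow> bool) \<Rightarrow> bool" where
  "graph V E \<longleftrightarrow> finite V \<and> (\<forall>x y. E x y \<longrightarrow> x \<in> V \<and> y \<in> V)
     \<and> (\<forall>x y. E x y \<longrightarrow> E y x) \<and> (\<forall>x. \<not> E x x)"

definition hom_cycles :: "'a set \<Rightarrow> ('a \<Rightarrow> 'a \<Rightarrow> bool) \<Rightarrow> nat \<Rightarrow> (nat \<Rightarrow> 'a) set" where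
  "hom_cycles V E n = {x \<in> {0..<n} \<rightarrow>\<^sub>E V. \<forall>i<n. E (x i) (x (Suc i mod n))}"

text \<open>hom(C_n, G); C_0 is the one-vertex graph, so hom(C_0,G) = |V|;
C_2 is a single edge (for n = 2 the formula counts ordered edges, = 2|E|).\<close>
definition hom_C :: "'a set \<Rightarrow> ('a \<Rightarrow> 'a \<Rightarrow> bool) \<Rightarrow> nat \<Rightarrow> nat" where
  "hom_C V E n = (if n = 0 then card V else card (hom_cycles V E n))"

end

theory Submission
  imports Defs "HOL-Analysis.Convex"
begin

definition walks :: "'a set \<Rightarrow> ('a \<Rightarrow> 'a \<Rightarrow> bool) \<Rightarrow> nat \<Rightarrow> 'a \<Rightarrow> 'a \<Rightarrow> (nat \<Rightarrow> 'a) set" where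
  "walks V E m z y = {p \<in> {0..m} \<rightarrow>\<^sub>E V. p 0 = z \<and> p m = y \<and> (\<forall>i<m. E (p i) (p (Suc i)))}"

lemma finite_walks: "finite V \<Longrightarrow> finite (walks V E m z y)"
  unfolding walks_def by (rule finite_subset[OF _ finite_PiE[of "{0..m}"]]) auto

lemma finite_hom_cycles: "finite V \<Longrightarrow> finite (hom_cycles V E n)"
  unfolding hom_cycles_def by (rule finite_subset[OF _ finite_PiE[of "{0..<n}"]]) auto

lemma CS_sqrt:
  fixes f g :: "'b \<Rightarrow> real"
  shows "(\<Sum>i\<in>I. f i * g i) \<le> sqrt (\<Sum>i\<in>I. (f i)\<^sup>2) * sqrt (\<Sum>i\<in>I. (g i)\<^sup>2)"
proof -
  have "(\<Sum>i\<in>I. f i * g i) \<le> \<bar>\<Sum>i\<in>I. f i * g i\<bar>" by simp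
  also have "\<dots> = sqrt ((\<Sum>i\<in>I. f i * g i)\<^sup>2)" by simp
  also have "\<dots> \<le> sqrt ((\<Sum>i\<in>I. (f i)\<^sup>2) * (\<Sum>i\<in>I. (g i)\<^sup>2))"
    by (rule real_sqrt_le_mono[OF Cauchy_Schwarz_ineq_sum])
  also have "\<dots> = sqrt (\<Sum>i\<in>I. (f i)\<^sup>2) * sqrt (\<Sum>i\<in>I. (g i)\<^sup>2)" by (simp add: real_sqrt_mult)
  finally show ?thesis .
qed

lemma split_cycles:
  assumes G: "graph V E" and m2: "1 \<le> m2"
  shows "card (hom_cycles V E (m1+m2)) = (\<Sum>z\<in>V. \<Sum>y\<in>V. card (walks V E m1 z y) * card (walks V E m2 z y))"
proof -
  define n where "n = m1 + m2"
  have sym: "\<And>a b. E a b \<Longrightarrow> E b a" and inV: "\<And>a b. E a b \<Longrightarrow> a \<in> V \<and> b \<in> V" and fin: "finite V"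
    using G unfolding graph_def by blast+
  define f where "f = (\<lambda>x::nat\<Rightarrow>'a. (x 0, x m1, restrict x {0..m1}, \<lambda>i\<in>{0..m2}. x ((n - i) mod n)))"
  define g where "g = (\<lambda>(z::'a,y::'a,p::nat\<Rightarrow>'a,q::nat\<Rightarrow>'a). \<lambda>i\<in>{0..<n}. if i \<le> m1 then p i else q (n - i))"
  define T where "T = Sigma V (\<lambda>z. Sigma V (\<lambda>y. walks V E m1 z y \<times> walks V E m2 z y))"
  have "bij_betw f (hom_cycles V E n) T"
  proof (rule bij_betw_byWitness[where f'=g])
    show "\<forall>x\<in>hom_cycles V E n. g (f x) = x"
    proof
      fix x assume x: "x \<in> hom_cycles V E n"
      show "g (f x) = x"
      proof
        fix i
        show "g (f x) i = x i"
          using x m2 by (auto simp: g_def f_def n_def hom_cycles_def PiE_def extensional_def)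
      qed
    qed
    show "\<forall>t\<in>T. f (g t) = t"
    proof
      fix t assume t: "t \<in> T"
      then obtain z y p q where tt: "t = (z,y,p,q)" and z: "z \<in> V" and y: "y \<in> V"
        and p: "p \<in> walks V E m1 z y" and q: "q \<in> walks V E m2 z y"
        unfolding T_def by auto
      have r1: "restrict (g t) {0..m1} = p"
      proof
        fix i show "restrict (g t) {0..m1} i = p i"
          using p m2 by (auto simp: tt g_def n_def walks_def PiE_def extensional_def)
      qed
      have r2: "(\<lambda>i\<in>{0..m2}. g t ((n - i) mod n)) = q"
      proof
        fix i show "(\<lambda>i\<in>{0..m2}. g t ((n - i) mod n)) i = q i"
        proof (cases "i \<in> {0..m2}")
          case True
          show ?thesis
          proof (cases "i = 0")
            case True then show ?thesis using p q m2 by (auto simp: tt g_def n_def walks_def)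
          next
            case False
            then have "(n - i) mod n = n - i" using True m2 by (simp add: n_def)
            show ?thesis
            proof (cases "i = m2")
              case True then show ?thesis using p q m2 by (auto simp: tt g_def n_def walks_def)
            next
              case False
              then have "\<not> n - i \<le> m1" using \<open>i \<in> {0..m2}\<close> by (auto simp: n_def)
              then show ?thesis using \<open>i \<in> {0..m2}\<close> \<open>(n - i) mod n = n - i\<close> \<open>i \<noteq> 0\<close> m2
                by (auto simp: tt g_def n_def)
            qed
          qed
        next
          case False then show ?thesis using q by (auto simp: walks_def PiE_def extensional_def)
        qed
      qed
      show "f (g t) = t"
        using p q m2 r1 r2 by (auto simp: f_def tt g_def n_def walks_def)
    qed
    show "f ` hom_cycles V E n \<subseteq> T"
    proof
      fix t assume "t \<in> f ` hom_cycles V E n"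
      then obtain x where x: "x \<in> hom_cycles V E n" and tt: "t = f x" by auto
      have xV: "\<And>i. i < n \<Longrightarrow> x i \<in> V" and xE: "\<And>i. i < n \<Longrightarrow> E (x i) (x (Suc i mod n))"
        using x unfolding hom_cycles_def by auto
      have n0: "0 < n" using m2 by (simp add: n_def)
      have "restrict x {0..m1} \<in> walks V E m1 (x 0) (x m1)"
      proof -
        have "\<And>i. i < m1 \<Longrightarrow> E (x i) (x (Suc i))"
        proof -
          fix i assume i: "i < m1"
          then have "Suc i mod n = Suc i" "i < n" using m2 by (auto simp: n_def)
          then show "E (x i) (x (Suc i))" using xE[of i] by simp
        qed
        then show ?thesis unfolding walks_def using xV m2 by (auto simp: n_def)
      qed
      moreover have "(\<lambda>i\<in>{0..m2}. x ((n - i) mod n)) \<in> walks V E m2 (x 0) (x m1)"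
      proof -
        have "\<forall>i<m2. E (x ((n - i) mod n)) (x ((n - Suc i) mod n))"
        proof (intro allI impI)
          fix i assume i: "i < m2"
          define a where "a = n - Suc i"
          have a: "a < n" "(n - i) mod n = Suc a mod n" "(n - Suc i) mod n = a"
            using i by (auto simp: a_def n_def Suc_diff_Suc)
          show "E (x ((n - i) mod n)) (x ((n - Suc i) mod n))"
            using xE[OF a(1)] a sym by simp
        qed
        moreover have "(n - m2) mod n = m1" using m2 by (simp add: n_def)
        ultimately show ?thesis unfolding walks_def using xV n0 by auto
      qed
      moreover have "x 0 \<in> V" "x m1 \<in> V" using xV n0 m2 by (auto simp: n_def)
      ultimately show "t \<in> T" unfolding T_def tt f_def by auto
    qed
    show "g ` T \<subseteq> hom_cycles V E n"
    proof
      fix x assume "x \<in> g ` T"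
      then obtain z y p q where tt: "x = g (z,y,p,q)" and z: "z \<in> V" and y: "y \<in> V"
        and p: "p \<in> walks V E m1 z y" and q: "q \<in> walks V E m2 z y"
        unfolding T_def by auto
      have pV: "\<And>i. i \<le> m1 \<Longrightarrow> p i \<in> V" and qV: "\<And>i. i \<le> m2 \<Longrightarrow> q i \<in> V"
        using p q by (auto simp: walks_def)
      have pE: "\<And>i. i < m1 \<Longrightarrow> E (p i) (p (Suc i))" and qE: "\<And>i. i < m2 \<Longrightarrow> E (q i) (q (Suc i))"
        and p0: "p 0 = z" and pm: "p m1 = y" and q0: "q 0 = z" and qm: "q m2 = y"
        using p q by (auto simp: walks_def)
      have xi: "\<And>i. i < n \<Longrightarrow> x i = (if i \<le> m1 then p i else q (n - i))"
        by (simp add: tt g_def)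
      have "x \<in> {0..<n} \<rightarrow>\<^sub>E V"
        using pV qV by (auto simp: tt g_def n_def)
      moreover have "\<forall>i<n. E (x i) (x (Suc i mod n))"
      proof (intro allI impI)
        fix i assume i: "i < n"
        show "E (x i) (x (Suc i mod n))"
        proof (cases "i < m1")
          case True
          then have "Suc i mod n = Suc i" using m2 by (simp add: n_def)
          then show ?thesis using True xi pE i m2 by (simp add: n_def)
        next
          case False
          have a: "x i = q (n - i)"
            using False xi[OF i] qm pm by (cases "i = m1") (auto simp: n_def)
          have b: "x (Suc i mod n) = q (n - Suc i)"
          proof (cases "Suc i < n")
            case True
            then show ?thesis using xi[OF True] False by (simp add: n_def)
          next
            case False
            then have "Suc i = n" using i by simp
            then show ?thesis using xi[of 0] p0 q0 m2 by (simp add: n_def)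
          qed
          have "E (q (n - Suc i)) (q (Suc (n - Suc i)))"
            using qE[of "n - Suc i"] i False by (simp add: n_def)
          moreover have "Suc (n - Suc i) = n - i" using i by simp
          ultimately show ?thesis using a b sym by simp
        qed
      qed
      ultimately show "x \<in> hom_cycles V E n" unfolding hom_cycles_def by simp
    qed
  qed
  then have "card (hom_cycles V E n) = card T" by (rule bij_betw_same_card)
  also have "\<dots> = (\<Sum>z\<in>V. \<Sum>y\<in>V. card (walks V E m1 z y) * card (walks V E m2 z y))"
    unfolding T_def using fin by (simp add: card_SigmaI finite_walks card_cartesian_product)
  finally show ?thesis by (simp add: n_def)
qed

lemma card_walks0:
  assumes "z \<in> V" shows "card (walks V E 0 z y) = (if z = y then 1 else 0)"
proof (cases "z = y")
  case True
  have "walks V E 0 z y = {\<lambda>i\<in>{0}. z}"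
  proof
    show "walks V E 0 z y \<subseteq> {\<lambda>i\<in>{0}. z}"
    proof
      fix p assume "p \<in> walks V E 0 z y"
      then have "p \<in> {0..0} \<rightarrow>\<^sub>E V" "p 0 = z" by (auto simp: walks_def)
      then have "p = (\<lambda>i\<in>{0}. z)" by (auto simp: PiE_def extensional_def fun_eq_iff)
      then show "p \<in> {\<lambda>i\<in>{0}. z}" by simp
    qed
    show "{\<lambda>i\<in>{0}. z} \<subseteq> walks V E 0 z y" using assms True by (auto simp: walks_def)
  qed
  then show ?thesis using True by simp
next
  case False
  then have "walks V E 0 z y = {}" by (auto simp: walks_def)
  then show ?thesis using False by simp
qed

definition hh :: "'a set \<Rightarrow> ('a \<Rightarrow> 'a \<Rightarrow> bool) \<Rightarrow> nat \<Rightarrow> real" where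
  "hh V E j = real (hom_C V E (2*j))"

lemma sum_sq_walks:
  assumes G: "graph V E"
  shows "(\<Sum>z\<in>V. \<Sum>y\<in>V. (real (card (walks V E m z y)))\<^sup>2) = hh V E m"
proof (cases "m = 0")
  case True
  have fin: "finite V" using G by (simp add: graph_def)
  have "(\<Sum>z\<in>V. \<Sum>y\<in>V. (real (card (walks V E m z y)))\<^sup>2) = (\<Sum>z\<in>V. \<Sum>y\<in>V. (if z = y then 1 else 0))"
    using True by (intro sum.cong refl) (simp add: card_walks0)
  also have "\<dots> = real (card V)" using fin by (simp add: sum.delta)
  finally show ?thesis using True by (simp add: hh_def hom_C_def)
next
  case False
  have "hom_C V E (2*m) = card (hom_cycles V E (m+m))" using False by (simp add: hom_C_def mult_2)
  also have "\<dots> = (\<Sum>z\<in>V. \<Sum>y\<in>V. card (walks V E m z y) * card (walks V E m z y))"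
    using split_cycles[OF G, of m m] False by simp
  finally show ?thesis unfolding hh_def by (simp add: power2_eq_square)
qed

lemma hh_nonneg: "0 \<le> hh V E j" by (simp add: hh_def)

lemma sum_prod_V:
  fixes f :: "'a \<Rightarrow> 'a \<Rightarrow> real"
  shows "(\<Sum>z\<in>V. \<Sum>y\<in>W. f z y) = (\<Sum>zy\<in>V \<times> W. f (fst zy) (snd zy))"
  by (simp add: sum.cartesian_product split_beta)

lemma logconv:
  assumes G: "graph V E" and j: "1 \<le> j"
  shows "hh V E j \<le> sqrt (hh V E (j-1)) * sqrt (hh V E (j+1))"
proof -
  let ?P = "\<lambda>m z y. real (card (walks V E m z y))"
  have "(2*j) = ((j-1)+(j+1))" using j by simp
  then have "hom_C V E (2*j) = card (hom_cycles V E ((j-1)+(j+1)))" using j by (simp add: hom_C_def mult_2)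
  also have "\<dots> = (\<Sum>z\<in>V. \<Sum>y\<in>V. card (walks V E (j-1) z y) * card (walks V E (j+1) z y))"
    by (rule split_cycles[OF G]) simp
  finally have "hh V E j = (\<Sum>z\<in>V. \<Sum>y\<in>V. ?P (j-1) z y * ?P (j+1) z y)" by (simp add: hh_def)
  also have "\<dots> = (\<Sum>zy\<in>V\<times>V. ?P (j-1) (fst zy) (snd zy) * ?P (j+1) (fst zy) (snd zy))"
    by (rule sum_prod_V)
  also have "\<dots> \<le> sqrt (\<Sum>zy\<in>V\<times>V. (?P (j-1) (fst zy) (snd zy))\<^sup>2) * sqrt (\<Sum>zy\<in>V\<times>V. (?P (j+1) (fst zy) (snd zy))\<^sup>2)"
    by (rule CS_sqrt)
  also have "\<dots> = sqrt (hh V E (j-1)) * sqrt (hh V E (j+1))"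
    using sum_prod_V[of "\<lambda>z y. (?P (j-1) z y)\<^sup>2" V V] sum_prod_V[of "\<lambda>z y. (?P (j+1) z y)\<^sup>2" V V]
      sum_sq_walks[OF G, of "j-1"] sum_sq_walks[OF G, of "j+1"] by simp
  finally show ?thesis .
qed


lemma interp:
  fixes h :: "nat \<Rightarrow> real" and k l :: nat
  assumes pos: "\<And>j. 0 < h j" and lc: "\<And>j. 1 \<le> j \<Longrightarrow> h j \<le> sqrt (h (j-1)) * sqrt (h (j+1))"
    and lk: "l < k"
  shows "sqrt (h (k-1)) * sqrt (h k) \<le> h l powr (1 / (2 * (real k - real l))) * h k powr (1 - 1 / (2 * (real k - real l)))"
proof -
  define \<rho> where "\<rho> j = h (Suc j) / h j" for j
  have sq: "(h (Suc j))\<^sup>2 \<le> h j * h (Suc (Suc j))" for j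
  proof -
    have "h (Suc j) \<le> sqrt (h j) * sqrt (h (Suc (Suc j)))" using lc[of "Suc j"] by simp
    then have "(h (Suc j))\<^sup>2 \<le> (sqrt (h j) * sqrt (h (Suc (Suc j))))\<^sup>2"
      using pos[of "Suc j"] by (intro power_mono) auto
    also have "\<dots> = h j * h (Suc (Suc j))" using pos[of j] pos[of "Suc (Suc j)"]
      by (simp add: power_mult_distrib)
    finally show ?thesis .
  qed
  have rs: "\<rho> j \<le> \<rho> (Suc j)" for j
  proof -
    have "h (Suc j) * h (Suc j) \<le> h j * h (Suc (Suc j))" using sq[of j] by (simp add: power2_eq_square)
    then show ?thesis unfolding \<rho>_def using pos[of j] pos[of "Suc j"]
      by (simp add: divide_simps mult.commute)
  qed
  have rmono: "i \<le> j \<Longrightarrow> \<rho> i \<le> \<rho> j" for i j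
    by (rule lift_Suc_mono_le[of \<rho>]) (use rs in auto)
  have rpos: "0 < \<rho> j" for j unfolding \<rho>_def using pos by simp
  have step: "l + n \<le> k \<Longrightarrow> h (l + n) \<le> h l * \<rho> (k-1) ^ n" for n
  proof (induction n)
    case 0 then show ?case by simp
  next
    case (Suc n)
    then have IH: "h (l + n) \<le> h l * \<rho> (k-1) ^ n" by simp
    have "h (l + Suc n) = h (l + n) * \<rho> (l + n)" unfolding \<rho>_def using pos[of "l+n"] by simp
    also have "\<dots> \<le> (h l * \<rho> (k-1) ^ n) * \<rho> (k-1)"
      using IH rmono[of "l+n" "k-1"] Suc.prems pos[of "l+n"] rpos[of "l+n"] pos[of l] rpos[of "k-1"]
      by (intro mult_mono) auto
    finally show ?case by (simp add: ac_simps)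
  qed
  define D where "D = k - l"
  have D1: "1 \<le> D" using lk by (simp add: D_def)
  have hk: "h k \<le> h l * (h k / h (k-1)) ^ D"
    using step[of D] lk unfolding D_def \<rho>_def by simp
  have key: "h (k-1) ^ D \<le> h l * h k ^ (D - 1)"
  proof -
    have "h k * h (k-1) ^ D \<le> h l * h k ^ D"
      using hk pos[of k] pos[of "k-1"] by (simp add: divide_simps power_divide)
    also have "h k ^ D = h k * h k ^ (D-1)" using D1 by (metis power_eq_if not_one_le_zero)
    finally have "h k * h (k-1) ^ D \<le> h k * (h l * h k ^ (D-1))" by (simp add: algebra_simps)
    then show ?thesis using pos[of k] by simp
  qed
  have rD: "real k - real l = real D" using lk by (simp add: D_def)
  have "h (k-1) = (h (k-1) ^ D) powr (1 / real D)"
    using pos[of "k-1"] D1 by (simp add: powr_realpow[symmetric] powr_powr)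
  also have "\<dots> \<le> (h l * h k ^ (D - 1)) powr (1 / real D)"
    using key pos[of "k-1"] by (intro powr_mono2) auto
  also have "\<dots> = h l powr (1 / real D) * h k powr ((real D - 1) / real D)"
    using pos[of l] pos[of k] D1
    by (simp add: powr_mult powr_realpow[symmetric] powr_powr of_nat_diff)
  finally have A: "h (k-1) \<le> h l powr (1 / real D) * h k powr ((real D - 1) / real D)" .
  have "sqrt (h (k-1)) * sqrt (h k) = h (k-1) powr (1/2) * h k powr (1/2)"
    using pos[of "k-1"] pos[of k] by (simp add: powr_half_sqrt)
  also have "\<dots> \<le> (h l powr (1 / real D) * h k powr ((real D - 1) / real D)) powr (1/2) * h k powr (1/2)"
    using A pos[of "k-1"] pos[of k] by (intro mult_right_mono powr_mono2) auto
  also have "\<dots> = h l powr (1 / (2 * real D)) * h k powr ((real D - 1) / (2 * real D) + 1/2)"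
    using pos[of l] pos[of k] by (simp add: powr_mult powr_powr powr_add mult.commute)
  also have "(real D - 1) / (2 * real D) + 1/2 = 1 - 1 / (2 * real D)"
    using D1 by (simp add: field_simps)
  finally show ?thesis by (simp add: rD)
qed


lemma D_bound:
  fixes rel :: "'a \<Rightarrow> 'a \<Rightarrow> bool"
  assumes G: "graph V E" and k: "2 \<le> k" and AV: "A \<subseteq> V" and BV: "B \<subseteq> V"
    and hs: "\<forall>u\<in>V. \<forall>v\<in>A. card {w\<in>B. E v w \<and> rel u w} \<le> s"
    and hd: "\<forall>w\<in>B. card {v\<in>A. E w v} \<le> \<Delta>"
  shows "real (card {x\<in>hom_cycles V E (2*k). x (k-1) \<in> A \<and> x k \<in> B \<and> (\<exists>t<k. rel (x t) (x k))})
         \<le> sqrt (real k * real s) * sqrt (hh V E (k-1)) * sqrt (real \<Delta> * hh V E k)"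
proof -
  have sym: "\<And>a b. E a b \<Longrightarrow> E b a" and inV: "\<And>a b. E a b \<Longrightarrow> a \<in> V \<and> b \<in> V" and fin: "finite V"
    using G unfolding graph_def by blast+
  have finA: "finite A" and finB: "finite B" using AV BV fin finite_subset by auto
  define Dset where "Dset = {x\<in>hom_cycles V E (2*k). x (k-1) \<in> A \<and> x k \<in> B \<and> (\<exists>t<k. rel (x t) (x k))}"
  define T where "T v p = {w\<in>B. E v w \<and> (\<exists>t<k. rel (p t) w)}" for v and p :: "nat \<Rightarrow> 'a"
  define Tgt where "Tgt = Sigma V (\<lambda>z. Sigma A (\<lambda>v. Sigma (walks V E (k-1) z v) (\<lambda>p. Sigma (T v p) (\<lambda>w. walks V E k z w))))"
  define \<phi> where "\<phi> x = (x 0, x (k-1), restrict x {0..k-1}, x k, \<lambda>i\<in>{0..k}. x ((2*k - i) mod (2*k)))" for x :: "nat \<Rightarrow> 'a"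
  have finT: "finite (T v p)" for v p using finB unfolding T_def by simp
  have finTgt: "finite Tgt" unfolding Tgt_def
    using fin finA finT by (intro finite_SigmaI) (auto simp: finite_walks)
  have inj: "inj_on \<phi> Dset"
  proof
    fix x y assume x: "x \<in> Dset" and y: "y \<in> Dset" and e: "\<phi> x = \<phi> y"
    have r1: "restrict x {0..k-1} = restrict y {0..k-1}"
     and r2: "(\<lambda>i\<in>{0..k}. x ((2*k - i) mod (2*k))) = (\<lambda>i\<in>{0..k}. y ((2*k - i) mod (2*k)))"
      using e by (auto simp: \<phi>_def)
    show "x = y"
    proof
      fix i
      show "x i = y i"
      proof (cases "i < 2*k")
        case True
        show ?thesis
        proof (cases "i \<le> k-1")
          case True then show ?thesis using fun_cong[OF r1, of i] by simp
        next
          case False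
          have "2*k - i \<in> {0..k}" "(2*k - (2*k - i)) mod (2*k) = i" using False \<open>i < 2*k\<close> by auto
          then show ?thesis using fun_cong[OF r2, of "2*k - i"] by simp
        qed
      next
        case False
        then show ?thesis using x y by (auto simp: Dset_def hom_cycles_def PiE_def extensional_def)
      qed
    qed
  qed
  have img: "\<phi> ` Dset \<subseteq> Tgt"
  proof
    fix t assume "t \<in> \<phi> ` Dset"
    then obtain x where x: "x \<in> Dset" and tt: "t = \<phi> x" by auto
    have xV: "\<And>i. i < 2*k \<Longrightarrow> x i \<in> V" and xE: "\<And>i. i < 2*k \<Longrightarrow> E (x i) (x (Suc i mod (2*k)))"
      and xA: "x (k-1) \<in> A" and xB: "x k \<in> B" and xr: "\<exists>t<k. rel (x t) (x k)"
      using x unfolding Dset_def hom_cycles_def by auto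
    have p: "restrict x {0..k-1} \<in> walks V E (k-1) (x 0) (x (k-1))"
    proof -
      have "\<And>i. i < k-1 \<Longrightarrow> E (x i) (x (Suc i))"
      proof -
        fix i assume i: "i < k-1"
        then have "Suc i mod (2*k) = Suc i" "i < 2*k" using k by auto
        then show "E (x i) (x (Suc i))" using xE[of i] by simp
      qed
      then show ?thesis unfolding walks_def using xV k by auto
    qed
    have w: "x k \<in> T (x (k-1)) (restrict x {0..k-1})"
    proof -
      have "E (x (k-1)) (x k)" using xE[of "k-1"] k by simp
      moreover obtain t where "t < k" "rel (x t) (x k)" using xr by auto
      ultimately show ?thesis unfolding T_def using xB by auto
    qed
    have q: "(\<lambda>i\<in>{0..k}. x ((2*k - i) mod (2*k))) \<in> walks V E k (x 0) (x k)"
    proof -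
      have "\<forall>i<k. E (x ((2*k - i) mod (2*k))) (x ((2*k - Suc i) mod (2*k)))"
      proof (intro allI impI)
        fix i assume i: "i < k"
        define a where "a = 2*k - Suc i"
        have a: "a < 2*k" "(2*k - i) mod (2*k) = Suc a mod (2*k)" "(2*k - Suc i) mod (2*k) = a"
          using i by (auto simp: a_def Suc_diff_Suc)
        show "E (x ((2*k - i) mod (2*k))) (x ((2*k - Suc i) mod (2*k)))"
          using xE[OF a(1)] a sym by simp
      qed
      moreover have "(2*k - k) mod (2*k) = k" using k by simp
      ultimately show ?thesis unfolding walks_def using xV k by auto
    qed
    have "x 0 \<in> V" using xV k by simp
    then show "t \<in> Tgt" unfolding Tgt_def tt \<phi>_def using p w q xA by auto
  qed
  have cardD: "card Dset \<le> card Tgt" by (rule card_inj_on_le[OF inj img finTgt])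
  define R where "R z w = real (card (walks V E k z w))" for z w
  define P where "P z v = real (card (walks V E (k-1) z v))" for z v
  define N where "N v = {w\<in>B. E v w}" for v
  define H where "H z v = sqrt (\<Sum>w\<in>N v. (R z w)\<^sup>2)" for z v
  have cardTgt: "real (card Tgt) = (\<Sum>z\<in>V. \<Sum>v\<in>A. \<Sum>p\<in>walks V E (k-1) z v. \<Sum>w\<in>T v p. R z w)"
    unfolding Tgt_def R_def using fin finA finT
    by (simp add: card_SigmaI finite_walks finite_SigmaI)
  have step1: "(\<Sum>w\<in>T v p. R z w) \<le> sqrt (real k * real s) * H z v"
    if v: "v \<in> A" and p: "p \<in> walks V E (k-1) z v" for z v p
  proof -
    have pV: "\<And>t. t < k \<Longrightarrow> p t \<in> V" using p k by (auto simp: walks_def)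
    have "T v p \<subseteq> (\<Union>t\<in>{..<k}. {w\<in>B. E v w \<and> rel (p t) w})" unfolding T_def by auto
    then have "card (T v p) \<le> card (\<Union>t\<in>{..<k}. {w\<in>B. E v w \<and> rel (p t) w})"
      using finB by (intro card_mono) auto
    also have "\<dots> \<le> (\<Sum>t\<in>{..<k}. card {w\<in>B. E v w \<and> rel (p t) w})" by (rule card_UN_le) simp
    also have "\<dots> \<le> (\<Sum>t\<in>{..<k}. s)" using hs pV v by (intro sum_mono) auto
    finally have cT: "card (T v p) \<le> k * s" by simp
    have "(\<Sum>w\<in>T v p. R z w) = (\<Sum>w\<in>T v p. 1 * R z w)" by simp
    also have "\<dots> \<le> sqrt (\<Sum>w\<in>T v p. 1\<^sup>2) * sqrt (\<Sum>w\<in>T v p. (R z w)\<^sup>2)" by (rule CS_sqrt)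
    also have "\<dots> \<le> sqrt (real k * real s) * H z v"
    proof (rule mult_mono)
      show "sqrt (\<Sum>w\<in>T v p. 1\<^sup>2) \<le> sqrt (real k * real s)"
        using cT by simp (metis of_nat_le_iff of_nat_mult)
      show "sqrt (\<Sum>w\<in>T v p. (R z w)\<^sup>2) \<le> H z v"
        unfolding H_def using finB
        by (intro real_sqrt_le_mono sum_mono2) (auto simp: N_def T_def)
    qed (auto intro: sum_nonneg)
    finally show ?thesis .
  qed
  have step2: "(\<Sum>p\<in>walks V E (k-1) z v. \<Sum>w\<in>T v p. R z w) \<le> P z v * (sqrt (real k * real s) * H z v)"
    if v: "v \<in> A" for z v
  proof -
    have "(\<Sum>p\<in>walks V E (k-1) z v. \<Sum>w\<in>T v p. R z w) \<le> (\<Sum>p\<in>walks V E (k-1) z v. sqrt (real k * real s) * H z v)"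
      using step1 v by (intro sum_mono) auto
    also have "\<dots> = P z v * (sqrt (real k * real s) * H z v)" by (simp add: P_def)
    finally show ?thesis .
  qed
  have "real (card Dset) \<le> (\<Sum>z\<in>V. \<Sum>v\<in>A. P z v * (sqrt (real k * real s) * H z v))"
    using cardD cardTgt step2 by (smt (verit) of_nat_le_iff sum_mono)
  also have "\<dots> = sqrt (real k * real s) * (\<Sum>zv\<in>V\<times>A. P (fst zv) (snd zv) * H (fst zv) (snd zv))"
    using sum_prod_V[of "\<lambda>z v. P z v * (sqrt (real k * real s) * H z v)" A V]
    by (simp add: sum_distrib_left ac_simps)
  also have "\<dots> \<le> sqrt (real k * real s) * (sqrt (\<Sum>zv\<in>V\<times>A. (P (fst zv) (snd zv))\<^sup>2) * sqrt (\<Sum>zv\<in>V\<times>A. (H (fst zv) (snd zv))\<^sup>2))"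
    by (intro mult_left_mono CS_sqrt) auto
  also have "\<dots> \<le> sqrt (real k * real s) * (sqrt (hh V E (k-1)) * sqrt (real \<Delta> * hh V E k))"
  proof -
    have a: "(\<Sum>zv\<in>V\<times>A. (P (fst zv) (snd zv))\<^sup>2) \<le> hh V E (k-1)"
    proof -
      have "(\<Sum>zv\<in>V\<times>A. (P (fst zv) (snd zv))\<^sup>2) \<le> (\<Sum>zv\<in>V\<times>V. (P (fst zv) (snd zv))\<^sup>2)"
        using AV fin by (intro sum_mono2) auto
      also have "\<dots> = hh V E (k-1)"
        using sum_prod_V[of "\<lambda>z y. (P z y)\<^sup>2" V V] sum_sq_walks[OF G, of "k-1"] by (simp add: P_def)
      finally show ?thesis .
    qed
    have b: "(\<Sum>zv\<in>V\<times>A. (H (fst zv) (snd zv))\<^sup>2) \<le> real \<Delta> * hh V E k"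
    proof -
      have "(\<Sum>zv\<in>V\<times>A. (H (fst zv) (snd zv))\<^sup>2) = (\<Sum>z\<in>V. \<Sum>v\<in>A. \<Sum>w\<in>N v. (R z w)\<^sup>2)"
        using sum_prod_V[of "\<lambda>z v. \<Sum>w\<in>N v. (R z w)\<^sup>2" A V] by (simp add: H_def sum_nonneg)
      also have "\<dots> = (\<Sum>z\<in>V. \<Sum>w\<in>B. \<Sum>v\<in>{v\<in>A. E v w}. (R z w)\<^sup>2)"
        unfolding N_def using finA finB by (intro sum.cong refl sum.swap_restrict)
      also have "\<dots> \<le> (\<Sum>z\<in>V. \<Sum>w\<in>B. real \<Delta> * (R z w)\<^sup>2)"
      proof (intro sum_mono)
        fix z w assume w: "w \<in> B"
        have "{v\<in>A. E v w} = {v\<in>A. E w v}" using sym by blast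
        then have "card {v\<in>A. E v w} \<le> \<Delta>" using hd w by simp
        then show "(\<Sum>v\<in>{v\<in>A. E v w}. (R z w)\<^sup>2) \<le> real \<Delta> * (R z w)\<^sup>2"
          by (simp add: mult_right_mono)
      qed
      also have "\<dots> \<le> (\<Sum>z\<in>V. \<Sum>w\<in>V. real \<Delta> * (R z w)\<^sup>2)"
        using BV fin by (intro sum_mono sum_mono2) auto
      also have "\<dots> = real \<Delta> * hh V E k"
        using sum_sq_walks[OF G, of k] by (simp add: R_def flip: sum_distrib_left)
      finally show ?thesis .
    qed
    show ?thesis using a b by (intro mult_left_mono mult_mono real_sqrt_le_mono) (auto simp: hh_nonneg sum_nonneg)
  qed
  finally show ?thesis by (simp add: Dset_def ac_simps)
qed


definition rot :: "nat \<Rightarrow> nat \<Rightarrow> (nat \<Rightarrow> 'a) \<Rightarrow> (nat \<Rightarrow> 'a)" where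
  "rot n r x = (\<lambda>i\<in>{0..<n}. x ((i + r) mod n))"

lemma mod_suc_shift: "(Suc i mod n + r) mod n = Suc ((i + r) mod n) mod (n::nat)"
  by (metis add_Suc mod_Suc_eq mod_add_left_eq)

lemma rot_cyc: "x \<in> hom_cycles V E n \<Longrightarrow> rot n r x \<in> hom_cycles V E n"
proof -
  assume x: "x \<in> hom_cycles V E n"
  then have xV: "\<And>i. i < n \<Longrightarrow> x i \<in> V" and xE: "\<And>i. i < n \<Longrightarrow> E (x i) (x (Suc i mod n))"
    unfolding hom_cycles_def by auto
  have "rot n r x \<in> {0..<n} \<rightarrow>\<^sub>E V" unfolding rot_def using xV by auto
  moreover have "\<forall>i<n. E (rot n r x i) (rot n r x (Suc i mod n))"
  proof (intro allI impI)
    fix i assume i: "i < n"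
    then have "(i + r) mod n < n" by simp
    then have "E (x ((i + r) mod n)) (x (Suc ((i + r) mod n) mod n))" by (rule xE)
    then show "E (rot n r x i) (rot n r x (Suc i mod n))"
      using i by (simp add: rot_def mod_suc_shift)
  qed
  ultimately show ?thesis unfolding hom_cycles_def by simp
qed

lemma rot_inj: "0 < n \<Longrightarrow> inj_on (rot n r) (hom_cycles V E n)"
proof
  fix x y assume n: "0 < n" and x: "x \<in> hom_cycles V E n" and y: "y \<in> hom_cycles V E n"
    and e: "rot n r x = rot n r y"
  show "x = y"
  proof
    fix m show "x m = y m"
    proof (cases "m < n")
      case True
      define i where "i = (m + (n - r mod n)) mod n"
      have i: "i < n" using n by (simp add: i_def)
      have "(i + r) mod n = m"
      proof -
        have "(i + r) mod n = (m + (n - r mod n) + r) mod n" by (simp add: i_def mod_add_left_eq)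
        also have "\<dots> = (m + (n - r mod n) + r mod n) mod n" by (simp add: mod_add_right_eq)
        also have "m + (n - r mod n) + r mod n = m + n"
          using n mod_less_divisor[OF n, of r] by linarith
        also have "(m + n) mod n = m" using True by simp
        finally show ?thesis .
      qed
      then show ?thesis using fun_cong[OF e, of i] i by (simp add: rot_def)
    next
      case False
      then show ?thesis using x y by (auto simp: hom_cycles_def PiE_def extensional_def)
    qed
  qed
qed

lemma pick_pos:
  fixes a b n k :: nat
  assumes ab: "a < b" "b < n" and n: "n = 2*k"
  shows "(\<exists>r<n. \<exists>t<k. (k + r) mod n = b \<and> (t + r) mod n = a) \<or> (\<exists>r<n. \<exists>t<k. (k + r) mod n = a \<and> (t + r) mod n = b)"
proof (cases "b - a \<le> k")
  case True
  define r where "r = (b + k) mod n"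
  define t where "t = k - (b - a)"
  have "(k + r) mod n = (k + (b + k)) mod n" unfolding r_def by (simp add: mod_add_right_eq)
  also have "k + (b + k) = b + n" using n by simp
  also have "(b + n) mod n = b" using ab by simp
  finally have 1: "(k + r) mod n = b" .
  have "(t + r) mod n = (t + (b + k)) mod n" unfolding r_def by (simp add: mod_add_right_eq)
  also have "t + (b + k) = a + n" using True ab unfolding t_def n by simp
  also have "(a + n) mod n = a" using ab by simp
  finally have 2: "(t + r) mod n = a" .
  have "r < n" "t < k" using ab unfolding r_def t_def n by auto
  then show ?thesis using 1 2 by blast
next
  case False
  define r where "r = (a + k) mod n"
  define t where "t = b - a - k"
  have "(k + r) mod n = (k + (a + k)) mod n" unfolding r_def by (simp add: mod_add_right_eq)
  also have "k + (a + k) = a + n" using n by simp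
  also have "(a + n) mod n = a" using ab by simp
  finally have 1: "(k + r) mod n = a" .
  have "(t + r) mod n = (t + (a + k)) mod n" unfolding r_def by (simp add: mod_add_right_eq)
  also have "t + (a + k) = b" using False ab unfolding t_def by simp
  also have "b mod n = b" using ab by simp
  finally have 2: "(t + r) mod n = b" .
  have "r < n" "t < k" using ab False unfolding r_def t_def n by auto
  then show ?thesis using 1 2 by blast
qed

lemma parity_suc: "p < n \<Longrightarrow> even n \<Longrightarrow> even (Suc p mod n) \<longleftrightarrow> odd (p::nat)"
proof (cases "Suc p < n")
  case False
  assume "p < n" "even n"
  then have "Suc p = n" using False by simp
  then show ?thesis using \<open>even n\<close> by auto
qed auto


definition Dset :: "'a set \<Rightarrow> ('a \<Rightarrow> 'a \<Rightarrow> bool) \<Rightarrow> ('a \<Rightarrow> 'a \<Rightarrow> bool) \<Rightarrow> nat \<Rightarrow> 'a set \<Rightarrow> 'a set \<Rightarrow> (nat \<Rightarrow> 'a) set" where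
  "Dset V E rel k A B = {x\<in>hom_cycles V E (2*k). x (k-1) \<in> A \<and> x k \<in> B \<and> (\<exists>t<k. rel (x t) (x k))}"

lemma union_bound:
  fixes rel :: "'a \<Rightarrow> 'a \<Rightarrow> bool"
  assumes G: "graph V E" and k: "2 \<le> k"
    and relsym: "\<forall>u\<in>V. \<forall>v\<in>V. rel u v \<longrightarrow> rel v u"
  shows "card {x \<in> hom_cycles V E (2*k).
             ((\<forall>i<2*k. x i \<in> (if even i then X1 else X2)) \<or>
              (\<forall>i<2*k. x i \<in> (if even i then X2 else X1))) \<and>
             (\<exists>i<2*k. \<exists>j<2*k. i \<noteq> j \<and> rel (x i) (x j))}
       \<le> 2*k * (card (Dset V E rel k X1 X2) + card (Dset V E rel k X2 X1))"
proof -
  define n where "n = 2*k"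
  have n0: "0 < n" using k by (simp add: n_def)
  have fin: "finite V" using G by (simp add: graph_def)
  define Dall where "Dall = Dset V E rel k X1 X2 \<union> Dset V E rel k X2 X1"
  define C where "C = {x \<in> hom_cycles V E (2*k).
             ((\<forall>i<2*k. x i \<in> (if even i then X1 else X2)) \<or>
              (\<forall>i<2*k. x i \<in> (if even i then X2 else X1))) \<and>
             (\<exists>i<2*k. \<exists>j<2*k. i \<noteq> j \<and> rel (x i) (x j))}"
  have finD: "finite Dall" unfolding Dall_def Dset_def using finite_hom_cycles[OF fin] by auto
  have sub: "C \<subseteq> (\<Union>r\<in>{..<n}. {x \<in> hom_cycles V E n. rot n r x \<in> Dall})"
  proof
    fix x assume x: "x \<in> C"
    then have xc: "x \<in> hom_cycles V E n" by (simp add: C_def n_def)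
    have xV: "\<And>i. i < n \<Longrightarrow> x i \<in> V" using xc unfolding hom_cycles_def by auto
    obtain i j where ij: "i < n" "j < n" "i \<noteq> j" "rel (x i) (x j)" using x by (auto simp: C_def n_def)
    have rel2: "rel (x j) (x i)" using relsym xV ij by blast
    define a where "a = min i j"
    define b where "b = max i j"
    have ab: "a < b" "b < n" using ij by (auto simp: a_def b_def)
    have relab: "rel (x a) (x b) \<and> rel (x b) (x a)" using ij rel2 by (auto simp: a_def b_def min_def max_def)
    obtain r t where r: "r < n" and t: "t < k" and rt: "rel (x ((t + r) mod n)) (x ((k + r) mod n))"
      using pick_pos[OF ab n_def] relab by blast
    define y where "y = rot n r x"
    have yc: "y \<in> hom_cycles V E n" unfolding y_def by (rule rot_cyc[OF xc])
    have kn: "k < n" "t < n" "k - 1 < n" using k t by (auto simp: n_def)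
    have "y t = x ((t + r) mod n)" "y k = x ((k + r) mod n)" using kn by (simp_all add: y_def rot_def)
    then have rel_y: "\<exists>t<k. rel (y t) (y k)" using rt t by metis
    define p where "p = (k - 1 + r) mod n"
    have p: "p < n" using n0 by (simp add: p_def)
    have yk1: "y (k-1) = x p" using kn by (simp add: y_def rot_def p_def)
    have "(k + r) mod n = Suc p mod n"
      using mod_suc_shift[of "k-1" n r] k kn by (simp add: p_def)
    then have yk: "y k = x (Suc p mod n)" using kn by (simp add: y_def rot_def)
    have par: "even (Suc p mod n) \<longleftrightarrow> odd p" using parity_suc[OF p] by (simp add: n_def)
    have sp: "Suc p mod n < n" using n0 by simp
    have "(y (k-1) \<in> X1 \<and> y k \<in> X2) \<or> (y (k-1) \<in> X2 \<and> y k \<in> X1)"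
    proof -
      have "(\<forall>i<n. x i \<in> (if even i then X1 else X2)) \<or> (\<forall>i<n. x i \<in> (if even i then X2 else X1))"
        using x by (simp add: C_def n_def)
      then show ?thesis
      proof
        assume h: "\<forall>i<n. x i \<in> (if even i then X1 else X2)"
        show ?thesis using h[rule_format, OF p] h[rule_format, OF sp] par yk yk1 by (cases "even p") auto
      next
        assume h: "\<forall>i<n. x i \<in> (if even i then X2 else X1)"
        show ?thesis using h[rule_format, OF p] h[rule_format, OF sp] par yk yk1 by (cases "even p") auto
      qed
    qed
    then have "y \<in> Dall" using yc rel_y unfolding Dall_def Dset_def n_def by blast
    then show "x \<in> (\<Union>r\<in>{..<n}. {x \<in> hom_cycles V E n. rot n r x \<in> Dall})"
      using r xc by (auto simp: y_def)
  qed
  have each: "card {x \<in> hom_cycles V E n. rot n r x \<in> Dall} \<le> card Dall" for r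
  proof (rule card_inj_on_le[OF _ _ finD])
    show "inj_on (rot n r) {x \<in> hom_cycles V E n. rot n r x \<in> Dall}"
      by (rule inj_on_subset[OF rot_inj[OF n0]]) auto
  qed auto
  have "card C \<le> card (\<Union>r\<in>{..<n}. {x \<in> hom_cycles V E n. rot n r x \<in> Dall})"
    by (rule card_mono[OF _ sub]) (use finite_hom_cycles[OF fin] in auto)
  also have "\<dots> \<le> (\<Sum>r\<in>{..<n}. card {x \<in> hom_cycles V E n. rot n r x \<in> Dall})" by (rule card_UN_le) simp
  also have "\<dots> \<le> (\<Sum>r\<in>{..<n}. card Dall)" by (intro sum_mono each)
  also have "\<dots> = n * card Dall" by simp
  also have "\<dots> \<le> n * (card (Dset V E rel k X1 X2) + card (Dset V E rel k X2 X1))"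
    unfolding Dall_def by (intro mult_left_mono card_Un_le) simp
  finally show ?thesis by (simp add: C_def n_def)
qed


lemma hh_pos:
  assumes G: "graph V E" and k: "1 \<le> k" and ne: "hom_C V E (2*k) \<noteq> 0"
  shows "0 < hh V E j"
proof -
  have sym: "\<And>a b. E a b \<Longrightarrow> E b a" and inV: "\<And>a b. E a b \<Longrightarrow> a \<in> V \<and> b \<in> V" and fin: "finite V"
    using G unfolding graph_def by blast+
  have "hom_cycles V E (2*k) \<noteq> {}" using ne k by (auto simp: hom_C_def)
  then obtain x where x: "x \<in> hom_cycles V E (2*k)" by auto
  have "\<forall>i<2*k. E (x i) (x (Suc i mod (2*k)))" using x unfolding hom_cycles_def by blast
  moreover have "0 < 2*k" using k by simp
  ultimately have "E (x 0) (x (Suc 0 mod (2*k)))" by blast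
  moreover have "Suc 0 mod (2*k) = 1" using k by simp
  ultimately have e: "E (x 0) (x 1)" by simp
  define a where "a = x 0"
  define b where "b = x 1"
  have eab: "E a b" using e by (simp add: a_def b_def)
  show ?thesis
  proof (cases "j = 0")
    case True
    have "a \<in> V" using inV eab by blast
    then have "card V > 0" using fin by (auto simp: card_gt_0_iff)
    then show ?thesis using True by (simp add: hh_def hom_C_def)
  next
    case False
    define y where "y = (\<lambda>i\<in>{0..<2*j}. if even i then a else b)"
    have "y \<in> hom_cycles V E (2*j)"
    proof -
      have "y \<in> {0..<2*j} \<rightarrow>\<^sub>E V" using inV eab by (auto simp: y_def)
      moreover have "\<forall>i<2*j. E (y i) (y (Suc i mod (2*j)))"
      proof (intro allI impI)
        fix i assume i: "i < 2*j"
        show "E (y i) (y (Suc i mod (2*j)))"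
        proof (cases "Suc i < 2*j")
          case True
          then show ?thesis using i eab sym by (auto simp: y_def)
        next
          case False
          then have "Suc i = 2*j" using i by simp
          then have "odd i" by (metis even_Suc even_mult_iff even_numeral)
          then show ?thesis using i False \<open>Suc i = 2*j\<close> eab sym by (auto simp: y_def)
        qed
      qed
      ultimately show ?thesis unfolding hom_cycles_def by simp
    qed
    then have "hom_cycles V E (2*j) \<noteq> {}" by auto
    then have "card (hom_cycles V E (2*j)) > 0" using finite_hom_cycles[OF fin] by (auto simp: card_gt_0_iff)
    then show ?thesis using False by (simp add: hh_def hom_C_def)
  qed
qed

theorem lemma2p4:
  fixes V :: "'a set" and E :: "'a \<Rightarrow> 'a \<Rightarrow> bool" and rel :: "'a \<Rightarrow> 'a \<Rightarrow> bool"
    and X1 X2 :: "'a set" and k l \<Delta>1 \<Delta>2 s1 s2 :: nat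
  assumes "graph V E"
    and "2 \<le> k" and "l \<le> k - 1"
    and "X1 \<subseteq> V" and "X2 \<subseteq> V"
    and "\<forall>u\<in>V. \<forall>v\<in>V. rel u v \<longrightarrow> rel v u"
    and "\<forall>u\<in>V. \<forall>v\<in>X1. card {w \<in> X2. E v w} \<le> \<Delta>1 \<and> card {w \<in> X2. E v w \<and> rel u w} \<le> s1"
    and "\<forall>u\<in>V. \<forall>v\<in>X2. card {w \<in> X1. E v w} \<le> \<Delta>2 \<and> card {w \<in> X1. E v w \<and> rel u w} \<le> s2"
  shows "real (card {x \<in> hom_cycles V E (2*k).
             ((\<forall>i<2*k. x i \<in> (if even i then X1 else X2)) \<or>
              (\<forall>i<2*k. x i \<in> (if even i then X2 else X1))) \<and>
             (\<exists>i<2*k. \<exists>j<2*k. i \<noteq> j \<and> rel (x i) (x j))})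
         \<le> 32 * real k powr (3/2) * sqrt (real (max (\<Delta>1 * s2) (\<Delta>2 * s1)))
            * real (hom_C V E (2*l)) powr (1 / (2 * (real k - real l)))
            * real (hom_C V E (2*k)) powr (1 - 1 / (2 * (real k - real l)))"
proof -
  note G = assms(1) and k = assms(2) and lk = assms(3) and X1V = assms(4) and X2V = assms(5)
    and relsym = assms(6) and h1 = assms(7) and h2 = assms(8)
  have fin: "finite V" using G by (simp add: graph_def)
  define C where "C = {x \<in> hom_cycles V E (2*k).
             ((\<forall>i<2*k. x i \<in> (if even i then X1 else X2)) \<or>
              (\<forall>i<2*k. x i \<in> (if even i then X2 else X1))) \<and>
             (\<exists>i<2*k. \<exists>j<2*k. i \<noteq> j \<and> rel (x i) (x j))}"
  define M where "M = real (max (\<Delta>1 * s2) (\<Delta>2 * s1))"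
  define \<alpha> where "\<alpha> = 1 / (2 * (real k - real l))"
  define RHS where "RHS = 32 * real k powr (3/2) * sqrt M
            * real (hom_C V E (2*l)) powr \<alpha> * real (hom_C V E (2*k)) powr (1 - \<alpha>)"
  have RHS0: "0 \<le> RHS" unfolding RHS_def M_def by simp
  show ?thesis
  proof (cases "hom_C V E (2*k) = 0")
    case True
    then have "card (hom_cycles V E (2*k)) = 0" using k by (simp add: hom_C_def)
    then have "hom_cycles V E (2*k) = {}" using finite_hom_cycles[OF fin] by simp
    then have "C = {}" by (simp add: C_def)
    then have "real (card C) \<le> RHS" using RHS0 by simp
    then show ?thesis unfolding C_def RHS_def M_def \<alpha>_def .
  next
    case False
    let ?h1 = "hh V E (k-1)" and ?h2 = "hh V E k"
    have hs12: "\<forall>u\<in>V. \<forall>v\<in>X1. card {w\<in>X2. E v w \<and> rel u w} \<le> s1" using h1 by blast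
    have hd12: "\<forall>w\<in>X2. card {v\<in>X1. E w v} \<le> \<Delta>2" using h2 X2V by blast
    have hs21: "\<forall>u\<in>V. \<forall>v\<in>X2. card {w\<in>X1. E v w \<and> rel u w} \<le> s2" using h2 by blast
    have hd21: "\<forall>w\<in>X1. card {v\<in>X2. E w v} \<le> \<Delta>1" using h1 X1V by blast
    have D12: "real (card (Dset V E rel k X1 X2)) \<le> sqrt (real k * real s1) * sqrt ?h1 * sqrt (real \<Delta>2 * ?h2)"
      using D_bound[OF G k X1V X2V hs12 hd12] by (simp add: Dset_def)
    have D21: "real (card (Dset V E rel k X2 X1)) \<le> sqrt (real k * real s2) * sqrt ?h1 * sqrt (real \<Delta>1 * ?h2)"
      using D_bound[OF G k X2V X1V hs21 hd21] by (simp add: Dset_def)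
    have sM1: "sqrt (real s1 * real \<Delta>2) \<le> sqrt M" unfolding M_def
      by (intro real_sqrt_le_mono) (metis max.cobounded2 mult.commute of_nat_le_iff of_nat_mult)
    have sM2: "sqrt (real s2 * real \<Delta>1) \<le> sqrt M" unfolding M_def
      by (intro real_sqrt_le_mono) (metis max.cobounded1 mult.commute of_nat_le_iff of_nat_mult)
    have hpos: "0 \<le> ?h1" "0 \<le> ?h2" by (simp_all add: hh_nonneg)
    have "real (card C) \<le> real (2*k) * (real (card (Dset V E rel k X1 X2)) + real (card (Dset V E rel k X2 X1)))"
    proof -
      have u: "card C \<le> 2*k * (card (Dset V E rel k X1 X2) + card (Dset V E rel k X2 X1))"
        using union_bound[OF G k relsym, of X1 X2] unfolding C_def .
      have "real (card C) \<le> real (2*k * (card (Dset V E rel k X1 X2) + card (Dset V E rel k X2 X1)))"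
        by (simp only: of_nat_le_iff u)
      then show ?thesis by simp
    qed
    also have "\<dots> \<le> real (2*k) * (sqrt (real k * real s1) * sqrt ?h1 * sqrt (real \<Delta>2 * ?h2)
                  + sqrt (real k * real s2) * sqrt ?h1 * sqrt (real \<Delta>1 * ?h2))"
      using D12 D21 by (intro mult_left_mono add_mono) auto
    also have "\<dots> = real (2*k) * sqrt (real k) * (sqrt (real s1 * real \<Delta>2) + sqrt (real s2 * real \<Delta>1)) * (sqrt ?h1 * sqrt ?h2)"
      by (simp add: real_sqrt_mult algebra_simps)
    also have "\<dots> \<le> real (2*k) * sqrt (real k) * (sqrt M + sqrt M) * (sqrt ?h1 * sqrt ?h2)"
      using sM1 sM2 hpos by (intro mult_right_mono mult_left_mono add_mono) auto
    also have "\<dots> = 4 * (real k * sqrt (real k)) * sqrt M * (sqrt ?h1 * sqrt ?h2)" by simp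
    also have "\<dots> \<le> 4 * (real k * sqrt (real k)) * sqrt M *
         (hh V E l powr \<alpha> * hh V E k powr (1 - \<alpha>))"
    proof (rule mult_left_mono)
      have pos: "\<And>j. 0 < hh V E j" using hh_pos[OF G _ False] k by simp
      have lc: "\<And>j. 1 \<le> j \<Longrightarrow> hh V E j \<le> sqrt (hh V E (j-1)) * sqrt (hh V E (j+1))"
        using logconv[OF G] by blast
      have "l < k" using lk k by simp
      from interp[of "hh V E", OF pos lc this]
      show "sqrt ?h1 * sqrt ?h2 \<le> hh V E l powr \<alpha> * hh V E k powr (1 - \<alpha>)" by (simp add: \<alpha>_def)
    qed (simp add: M_def)
    also have "\<dots> \<le> RHS"
    proof -
      have kk: "real k * sqrt (real k) = real k powr (3/2)"
      proof -
        have "real k powr (3/2) = real k powr (1 + 1/2)" by simp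
        also have "\<dots> = real k powr 1 * real k powr (1/2)" by (rule powr_add)
        also have "\<dots> = real k * sqrt (real k)" using k by (simp add: powr_half_sqrt)
        finally show ?thesis by simp
      qed
      have "0 \<le> real k powr (3/2) * sqrt M * (hh V E l powr \<alpha> * hh V E k powr (1 - \<alpha>))"
        unfolding M_def by simp
      then show ?thesis unfolding RHS_def kk by (simp add: hh_def ac_simps)
    qed
    finally show ?thesis unfolding C_def RHS_def M_def \<alpha>_def .
  qed
qed

end
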